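(* Let $V\subseteq\mathcal V$ be finite and let $\Theta,\Psi\subseteq\mathcal P(\mathcal H_V)$ be convex and closed. (1) If $\Theta\neq\emptyset$, then $\Theta\preceq_{dem}\Psi$ iff $\Theta\le_S\Psi$. (2) If $\Psi\neq\emptyset$, then $\Theta\preceq_{ang}\Psi$ iff $\Theta\le_H\Psi$.
   Context: $\mathcal H_V$ is a finite-dimensional Hilbert space (tensor product of qubit spaces). $\mathcal D(\mathcal H_V)$: partial density operators (positive, trace $\le1$); $\mathcal P(\mathcal H_V)$: effects (positive operators with eigenvalues in $[0,1]$); $\sqsubseteq$: Löwner order. For $\Theta\subseteq\mathcal P(\mathcal H_V)$ and $\rho\in\mathcal D(\mathcal H_V)$: $\mathrm{Exp}_{dem}(\rho\models\Theta)=\inf_{M\in\Theta}{\rm tr}(M\rho)$ (equal to ${\rm tr}(\rho)$ if $\Theta=\emptyset$) and $\mathrm{Exp}_{ang}(\rho\models\Theta)=\sup_{M\in\Theta}{\rm tr}(M\rho)$ (equal to $0$ if $\Theta=\emptyset$). $\Theta\preceq_{dem}\Psi$ iff $\mathrm{Exp}_{dem}(\rho\models\Theta)\le\mathrm{Exp}_{dem}(\rho\models\Psi)$ for all $\rho\in\mathcal D(\mathcal H_V)$; $\Theta\preceq_{ang}\Psi$ iff $\mathrm{Exp}_{ang}(\rho\models\Theta)\le\mathrm{Exp}_{ang}(\rho\models\Psi)$ for all $\rho\in\mathcal D(\mathcal H_V)$. $\Theta\le_H\Psi$ iff $\forall M\in\Theta\,\exists N\in\Psi: M\sqsubseteq N$;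 $\Theta\le_S\Psi$ iff $\forall N\in\Psi\,\exists M\in\Theta:M\sqsubseteq N$. *)

theory Defs
  imports "HOL-Analysis.Analysis"
begin

text \<open>Operators on the Hilbert space H_V are complex n x n matrices, indexed by a finite type 'n.\<close>

definition cadj :: "complex^'n^'n \<Rightarrow> complex^'n^'n" where
  "cadj A = (\<chi> i j. cnj (A $ j $ i))"

definition qform :: "complex^'n^'n \<Rightarrow> complex^'n \<Rightarrow> complex" where
  "qform A x = (\<Sum>i\<in>UNIV. cnj (x $ i) * (A *v x) $ i)"

definition positive_op :: "complex^'n^'n \<Rightarrow> bool" where
  "positive_op A \<longleftrightarrow> cadj A = A \<and> (\<forall>x. 0 \<le> Re (qform A x))"

definition loewner_le :: "complex^'n^'n \<Rightarrow> complex^'n^'n \<Rightarrow> bool" (infix "\<sqsubseteq>\<^sub>L" 50) where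
  "A \<sqsubseteq>\<^sub>L B \<longleftrightarrow> positive_op (B - A)"

definition pdo :: "(complex^'n^'n) set" where
  "pdo = {\<rho>. positive_op \<rho> \<and> Re (trace \<rho>) \<le> 1}"

definition effects :: "(complex^'n^'n) set" where
  "effects = {M. positive_op M \<and> M \<sqsubseteq>\<^sub>L mat 1}"

definition exp_dem :: "complex^'n^'n \<Rightarrow> (complex^'n^'n) set \<Rightarrow> real" where
  "exp_dem \<rho> \<Theta> = (if \<Theta> = {} then Re (trace \<rho>) else Inf ((\<lambda>M. Re (trace (M ** \<rho>))) ` \<Theta>))"

definition exp_ang :: "complex^'n^'n \<Rightarrow> (complex^'n^'n) set \<Rightarrow> real" where
  "exp_ang \<rho> \<Theta> = (if \<Theta> = {} then 0 else Sup ((\<lambda>M. Re (trace (M ** \<rho>))) ` \<Theta>))"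

definition preceq_dem :: "(complex^'n^'n) set \<Rightarrow> (complex^'n^'n) set \<Rightarrow> bool" where
  "preceq_dem \<Theta> \<Psi> \<longleftrightarrow> (\<forall>\<rho>\<in>pdo. exp_dem \<rho> \<Theta> \<le> exp_dem \<rho> \<Psi>)"

definition preceq_ang :: "(complex^'n^'n) set \<Rightarrow> (complex^'n^'n) set \<Rightarrow> bool" where
  "preceq_ang \<Theta> \<Psi> \<longleftrightarrow> (\<forall>\<rho>\<in>pdo. exp_ang \<rho> \<Theta> \<le> exp_ang \<rho> \<Psi>)"

definition le_H :: "(complex^'n^'n) set \<Rightarrow> (complex^'n^'n) set \<Rightarrow> bool" where
  "le_H \<Theta> \<Psi> \<longleftrightarrow> (\<forall>M\<in>\<Theta>. \<exists>N\<in>\<Psi>. M \<sqsubseteq>\<^sub>L N)"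

definition le_S :: "(complex^'n^'n) set \<Rightarrow> (complex^'n^'n) set \<Rightarrow> bool" where
  "le_S \<Theta> \<Psi> \<longleftrightarrow> (\<forall>N\<in>\<Psi>. \<exists>M\<in>\<Theta>. M \<sqsubseteq>\<^sub>L N)"

end

theory Submission
  imports Defs
begin


lemma cadj_nth[simp]: "cadj A $ i $ j = cnj (A $ j $ i)"
  by (simp add: cadj_def)

lemma cadj_cadj[simp]: "cadj (cadj A) = A"
  by (simp add: vec_eq_iff)

lemma cadj_add: "cadj (A + B) = cadj A + cadj B"
  by (simp add: vec_eq_iff)

lemma cadj_diff: "cadj (A - B) = cadj A - cadj B"
  by (simp add: vec_eq_iff)

lemma cadj_minus: "cadj (- A) = - cadj A"
  by (simp add: vec_eq_iff)

lemma cadj_scaleR: "cadj (c *\<^sub>R A) = c *\<^sub>R cadj A"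
  by (simp add: vec_eq_iff)

lemma cadj_zero[simp]: "cadj 0 = 0"
  by (simp add: vec_eq_iff)

lemma cadj_mat1[simp]: "cadj (mat 1) = mat 1"
  by (simp add: vec_eq_iff mat_def)

lemma inner_cnj_cnj: "inner (cnj u) (cnj v) = inner u (v::complex)"
  by (simp add: inner_complex_def)

lemma inner_cadj: "inner (cadj a) (cadj y) = inner a y"
proof -
  have "inner (cadj a) (cadj y) = (\<Sum>i\<in>UNIV. \<Sum>j\<in>UNIV. inner (a $ j $ i) (y $ j $ i))"
    by (simp add: inner_vec_def inner_cnj_cnj)
  also have "\<dots> = (\<Sum>j\<in>UNIV. \<Sum>i\<in>UNIV. inner (a $ j $ i) (y $ j $ i))"
    by (rule sum.swap)
  also have "\<dots> = inner a y" by (simp add: inner_vec_def)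
  finally show ?thesis .
qed

lemma inner_cadj_herm: "cadj y = y \<Longrightarrow> inner (cadj a) y = inner a y"
  using inner_cadj[of a y] by simp

lemma trace_inner: "Re (trace (X ** r)) = inner (cadj r) X"
proof -
  have "Re (trace (X ** r)) = (\<Sum>i\<in>UNIV. \<Sum>k\<in>UNIV. Re (X $ i $ k * r $ k $ i))"
    by (simp add: trace_def matrix_matrix_mult_def Re_sum)
  also have "\<dots> = (\<Sum>i\<in>UNIV. \<Sum>k\<in>UNIV. inner (cnj (r $ k $ i)) (X $ i $ k))"
    by (simp add: inner_complex_def mult.commute)
  also have "\<dots> = inner (cadj r) X" by (simp add: inner_vec_def)
  finally show ?thesis .
qed

definition outer :: "complex^'n \<Rightarrow> complex^'n^'n" where
  "outer x = (\<chi> i j. x $ i * cnj (x $ j))"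

lemma qform_inner: "Re (qform A x) = inner (outer x) A"
proof -
  have "Re (qform A x) = (\<Sum>i\<in>UNIV. \<Sum>j\<in>UNIV. Re (cnj (x $ i) * (A $ i $ j * x $ j)))"
    by (simp add: qform_def matrix_vector_mult_def Re_sum sum_distrib_left)
  also have "\<dots> = inner (outer x) A"
    by (simp add: inner_vec_def outer_def inner_complex_def algebra_simps)
  finally show ?thesis .
qed

lemma cadj_outer[simp]: "cadj (outer x) = outer x"
  by (simp add: vec_eq_iff outer_def)

lemma qform_outer: "qform (outer v) y = cnj (\<Sum>j\<in>UNIV. cnj (v $ j) * y $ j) * (\<Sum>j\<in>UNIV. cnj (v $ j) * y $ j)"
proof -
  have "qform (outer v) y = (\<Sum>i\<in>UNIV. cnj (y $ i) * v $ i * (\<Sum>j\<in>UNIV. cnj (v $ j) * y $ j))"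
    by (simp add: qform_def matrix_vector_mult_def outer_def sum_distrib_left algebra_simps)
  also have "\<dots> = (\<Sum>i\<in>UNIV. cnj (y $ i) * v $ i) * (\<Sum>j\<in>UNIV. cnj (v $ j) * y $ j)"
    by (simp add: sum_distrib_right)
  also have "(\<Sum>i\<in>UNIV. cnj (y $ i) * v $ i) = cnj (\<Sum>j\<in>UNIV. cnj (v $ j) * y $ j)"
    by (simp add: mult.commute)
  finally show ?thesis .
qed

lemma Re_cnj_mult_self: "Re (cnj z * z) = (cmod z)^2"
  by (metis Re_complex_of_real complex_norm_square mult.commute)

lemma positive_outer: "positive_op (outer v)"
  unfolding positive_op_def by (simp only: qform_outer Re_cnj_mult_self cadj_outer) simp

lemma qform_add: "qform (A + B) x = qform A x + qform B x"
  by (simp add: qform_def matrix_vector_mult_def sum.distrib algebra_simps)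

lemma qform_diff: "qform (A - B) x = qform A x - qform B x"
  by (simp add: qform_def matrix_vector_mult_def sum_subtractf algebra_simps)

lemma scaleR_mat_nth: "(c *\<^sub>R A) $ i $ j = complex_of_real c * A $ i $ j"
  by (simp only: vector_scaleR_component) (simp add: scaleR_conv_of_real)

lemma qform_scaleR: "qform (c *\<^sub>R A) x = c *\<^sub>R qform A x"
  by (simp add: qform_def matrix_vector_mult_def scaleR_mat_nth scaleR_conv_of_real[where 'a=complex] sum_distrib_left algebra_simps del: scaleR_conv_of_real)

lemma qform_zero[simp]: "qform 0 x = 0"
  by (simp add: qform_def matrix_vector_mult_def)

lemma positive_add: "positive_op A \<Longrightarrow> positive_op B \<Longrightarrow> positive_op (A + B)"
  unfolding positive_op_def by (simp add: cadj_add qform_add)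

lemma positive_scaleR: "positive_op A \<Longrightarrow> 0 \<le> c \<Longrightarrow> positive_op (c *\<^sub>R A)"
  unfolding positive_op_def by (simp add: cadj_scaleR qform_scaleR)

lemma positive_zero[simp]: "positive_op 0"
  unfolding positive_op_def by simp

lemma positive_mat1: "positive_op (mat 1)"
  unfolding positive_op_def qform_def
  by (simp add: Re_sum Re_cnj_mult_self sum_nonneg)



lemma herm_entry: "cadj Q = Q \<Longrightarrow> Q $ a $ b = cnj (Q $ b $ a)"
  by (metis cadj_nth)

lemma herm_diag_real: "cadj Q = Q \<Longrightarrow> Q $ i $ i = complex_of_real (Re (Q $ i $ i))"
proof -
  assume h: "cadj Q = Q"
  have "Q $ i $ i = cnj (Q $ i $ i)" by (rule herm_entry[OF h])
  then have "Im (Q $ i $ i) = 0" by (simp add: complex_eq_iff)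
  then show ?thesis by (simp add: complex_eq_iff)
qed

lemma qform_cross:
  assumes h: "cadj Q = Q"
  shows "qform Q (x + axis i t) = qform Q x + t * cnj ((Q *v x) $ i) + cnj t * (Q *v x) $ i
           + cnj t * t * Q $ i $ i"
proof -
  have mv: "Q *v (x + axis i t) = Q *v x + (\<chi> a. Q $ a $ i * t)"
  proof -
    have "Q *v axis i t = (\<chi> a. Q $ a $ i * t)"
      by (simp add: vec_eq_iff matrix_vector_mult_def axis_def if_distrib[of "\<lambda>z. _ * z"] cong: if_cong)
    then show ?thesis by (simp add: matrix_vector_right_distrib)
  qed
  have "qform Q (x + axis i t) = (\<Sum>a\<in>UNIV. cnj (x $ a + (if a = i then t else 0)) *
           ((Q *v x) $ a + Q $ a $ i * t))"
    by (simp only: qform_def mv) (simp add: axis_def)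
  also have "\<dots> = (\<Sum>a\<in>UNIV. cnj (x $ a) * (Q *v x) $ a + cnj (x $ a) * Q $ a $ i * t
      + (if a = i then cnj t * (Q *v x) $ i + cnj t * t * Q $ i $ i else 0))"
    by (rule sum.cong) (auto simp: algebra_simps)
  also have "\<dots> = (\<Sum>a\<in>UNIV. cnj (x $ a) * (Q *v x) $ a) + (\<Sum>a\<in>UNIV. cnj (x $ a) * Q $ a $ i * t)
      + (cnj t * (Q *v x) $ i + cnj t * t * Q $ i $ i)"
    by (simp only: sum.distrib sum.delta' finite_UNIV) simp
  also have "(\<Sum>a\<in>UNIV. cnj (x $ a) * Q $ a $ i * t) = t * cnj ((Q *v x) $ i)"
  proof -
    have "(\<Sum>a\<in>UNIV. cnj (x $ a) * Q $ a $ i * t) = t * (\<Sum>a\<in>UNIV. cnj (Q $ i $ a * x $ a))"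
    proof -
      have e: "cnj (Q $ i $ a * x $ a) = Q $ a $ i * cnj (x $ a)" for a
        using herm_entry[OF h, of a i] by simp
      show ?thesis by (simp only: e sum_distrib_left) (simp add: mult_ac)
    qed
    then show ?thesis by (simp add: matrix_vector_mult_def)
  qed
  finally show ?thesis by (simp add: qform_def mult.assoc)
qed

lemma aux_cnj_sq: "Re (cnj t * t * c) = (cmod t)^2 * Re c"
proof -
  have "cnj t * t = complex_of_real ((cmod t)^2)"
    by (metis complex_norm_square mult.commute of_real_power)
  then show ?thesis by simp
qed

lemma aux_cnj_swap: "Re (t * cnj w) = Re (cnj t * w)"
  by simp

lemma Re_qform_cross:
  assumes h: "cadj Q = Q"
  shows "Re (qform Q (x + axis i t)) = Re (qform Q x) + 2 * Re (cnj t * (Q *v x) $ i)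
           + (cmod t)^2 * Re (Q $ i $ i)"
proof -
  have e: "Re (qform Q (x + axis i t)) = Re (qform Q x) + Re (t * cnj ((Q *v x) $ i))
      + Re (cnj t * (Q *v x) $ i) + Re (cnj t * t * Q $ i $ i)"
    by (simp only: qform_cross[OF h] plus_complex.sel)
  show ?thesis unfolding e aux_cnj_sq aux_cnj_swap by simp
qed



lemma mv_axis: "(Q *v axis b t) $ i = Q $ i $ b * t"
  by (simp add: matrix_vector_mult_def axis_def if_distrib[of "\<lambda>z. _ * z"] cong: if_cong)

lemma diag_nonneg:
  assumes "positive_op Q" shows "0 \<le> Re (Q $ i $ i)"
proof -
  have h: "cadj Q = Q" using assms by (simp add: positive_op_def)
  have "0 \<le> Re (qform Q (0 + axis i 1))" using assms by (simp add: positive_op_def)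
  also have "Re (qform Q (0 + axis i 1)) = Re (Q $ i $ i)"
    by (subst Re_qform_cross[OF h]) (simp add: qform_def)
  finally show ?thesis .
qed

lemma diag_zero_row:
  assumes "positive_op Q" and "Re (Q $ i $ i) = 0" shows "Q $ i $ b = 0"
proof (rule ccontr)
  assume nz: "Q $ i $ b \<noteq> 0"
  have h: "cadj Q = Q" using assms by (simp add: positive_op_def)
  define w where "w = Q $ i $ b"
  define R where "R = Re (qform Q (axis b 1))"
  define s where "s = (\<bar>R\<bar> + 1) / (2 * (cmod w)^2)"
  have wpos: "0 < (cmod w)^2" using nz by (simp add: w_def)
  define t where "t = - (complex_of_real s * w)"
  have "Re (cnj t * (Q *v axis b 1) $ i) = - s * (cmod w)^2"
    by (simp add: t_def mv_axis w_def[symmetric] Re_cnj_mult_self[symmetric] mult.assoc)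
  moreover have "0 \<le> Re (qform Q (axis b 1 + axis i t))" using assms by (simp add: positive_op_def)
  ultimately have "0 \<le> R - 2 * s * (cmod w)^2"
    using Re_qform_cross[OF h, of "axis b 1" i t] assms(2) by (simp add: R_def)
  moreover have "2 * s * (cmod w)^2 = \<bar>R\<bar> + 1" using wpos by (simp add: s_def)
  ultimately show False by linarith
qed

lemma psd_inner_aux:
  assumes P: "positive_op P" and fin: "finite S"
  shows "\<forall>Q. positive_op Q \<and> (\<forall>a b. a \<notin> S \<longrightarrow> Q $ a $ b = 0) \<longrightarrow> 0 \<le> inner P Q"
  using fin
proof (induction S rule: finite_induct)
  case empty
  show ?case
  proof (intro allI impI)
    fix Q :: "complex^'a^'a"
    assume "positive_op Q \<and> (\<forall>a b. a \<notin> {} \<longrightarrow> Q $ a $ b = 0)"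
    then have "Q = 0" by (simp add: vec_eq_iff)
    then show "0 \<le> inner P Q" by simp
  qed
next
  case (insert i S)
  show ?case
  proof (intro allI impI, elim conjE)
    fix Q :: "complex^'a^'a"
    assume Qp: "positive_op Q" and sup: "\<forall>a b. a \<notin> insert i S \<longrightarrow> Q $ a $ b = 0"
    have h: "cadj Q = Q" using Qp by (simp add: positive_op_def)
    define q where "q = Re (Q $ i $ i)"
    have q0: "0 \<le> q" using diag_nonneg[OF Qp] by (simp add: q_def)
    show "0 \<le> inner P Q"
    proof (cases "q = 0")
      case True
      have "\<forall>a b. a \<notin> S \<longrightarrow> Q $ a $ b = 0"
      proof (intro allI impI)
        fix a b assume "a \<notin> S"
        then show "Q $ a $ b = 0" using sup diag_zero_row[OF Qp, of i b] True
          by (cases "a = i") (auto simp: q_def)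
      qed
      then show ?thesis using insert.IH Qp by blast
    next
      case False
      then have qp: "0 < q" using q0 by simp
      have Qii: "Q $ i $ i = complex_of_real q" using herm_diag_real[OF h] by (simp add: q_def)
      define v where "v = (\<chi> a. Q $ a $ i)"
      define R where "R = (1 / q) *\<^sub>R outer v"
      define Q' where "Q' = Q - R"
      have Rab: "R $ a $ b = complex_of_real (1/q) * (Q $ a $ i * Q $ i $ b)" for a b
        by (simp add: R_def outer_def v_def herm_entry[OF h, of i b] scaleR_conv_of_real[where 'a=complex] divide_complex_def mult.commute)
      have supQ': "\<forall>a b. a \<notin> S \<longrightarrow> Q' $ a $ b = 0"
      proof (intro allI impI)
        fix a b assume a: "a \<notin> S"
        show "Q' $ a $ b = 0"
        proof (cases "a = i")
          case True
          then show ?thesis using qp by (simp add: Q'_def Rab Qii)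
        next
          case False
          then show ?thesis using a sup by (simp add: Q'_def Rab)
        qed
      qed
      have hQ': "cadj Q' = Q'"
        by (simp add: Q'_def R_def cadj_diff cadj_scaleR h)
      have posQ': "positive_op Q'"
        unfolding positive_op_def
      proof (intro conjI allI hQ')
        fix x
        define w where "w = (Q *v x) $ i"
        have s: "(\<Sum>j\<in>UNIV. cnj (v $ j) * x $ j) = w"
          by (simp add: v_def w_def matrix_vector_mult_def herm_entry[OF h, of i])
        have "Re (qform Q' x) = Re (qform Q x) - (1/q) * (cmod w)^2"
          by (simp add: Q'_def R_def qform_diff qform_scaleR qform_outer s Re_cnj_mult_self cmod_def power2_eq_square)
        moreover
        define t where "t = - (complex_of_real (1/q) * w)"
        have "Re (cnj t * (Q *v x) $ i) = - (1/q) * (cmod w)^2"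
          by (simp add: t_def w_def[symmetric] Re_cnj_mult_self[symmetric] mult.assoc)
        moreover have "(cmod t)^2 * Re (Q $ i $ i) = (1/q) * (cmod w)^2"
          using qp by (simp add: t_def norm_mult norm_divide power_mult_distrib q_def[symmetric] power2_eq_square)
        moreover have "0 \<le> Re (qform Q (x + axis i t))" using Qp by (simp add: positive_op_def)
        ultimately show "0 \<le> Re (qform Q' x)"
          using Re_qform_cross[OF h, of x i t] by simp
      qed
      have "0 \<le> inner P Q'" using insert.IH posQ' supQ' by blast
      moreover have "0 \<le> inner P R"
      proof -
        have "inner P R = (1/q) * Re (qform P v)"
          by (simp add: R_def qform_inner inner_commute)
        also have "0 \<le> \<dots>" using P qp by (simp add: positive_op_def)
        finally show ?thesis .
      qed
      moreover have "Q = Q' + R" by (simp add: Q'_def)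
      ultimately show ?thesis by (simp add: inner_add_right)
    qed
  qed
qed

lemma psd_inner_nonneg:
  assumes "positive_op P" "positive_op Q" shows "0 \<le> inner P Q"
  using psd_inner_aux[OF assms(1), of UNIV] assms(2) by simp



lemma pdo_trace: "\<rho> \<in> pdo \<Longrightarrow> Re (trace (X ** \<rho>)) = inner \<rho> X"
  by (simp add: pdo_def positive_op_def trace_inner)

lemma eff_pos: "M \<in> effects \<Longrightarrow> positive_op M"
  by (simp add: effects_def)

lemma eff_pos2: "M \<in> effects \<Longrightarrow> positive_op (mat 1 - M)"
  by (simp add: effects_def loewner_le_def)

lemma pos_herm: "positive_op M \<Longrightarrow> cadj M = M"
  by (simp add: positive_op_def)

lemma inner_mono: "positive_op \<rho> \<Longrightarrow> M \<sqsubseteq>\<^sub>L N \<Longrightarrow> inner \<rho> M \<le> inner \<rho> N"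
  using psd_inner_nonneg[of \<rho> "N - M"] by (simp add: loewner_le_def inner_diff_right)

lemma eff_bounds:
  assumes "positive_op \<rho>" "M \<in> effects"
  shows "0 \<le> inner \<rho> M" "inner \<rho> M \<le> inner \<rho> (mat 1)"
  using psd_inner_nonneg[OF assms(1) eff_pos[OF assms(2)]]
    psd_inner_nonneg[OF assms(1) eff_pos2[OF assms(2)]] by (auto simp: inner_diff_right)

lemma pdo_trace_one: "\<rho> \<in> pdo \<Longrightarrow> Re (trace \<rho>) = inner \<rho> (mat 1)"
  using pdo_trace[of \<rho> "mat 1"] by simp

lemma effects_bounded: "bounded (effects :: (complex^'n^'n) set)"
  unfolding bounded_iff
proof (intro exI ballI)
  fix M :: "complex^'n^'n" assume M: "M \<in> effects"
  have I: "positive_op (mat 1 :: complex^'n^'n)" by (rule positive_mat1)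
  have "inner M M \<le> inner M (mat 1)"
    using eff_bounds(2)[OF eff_pos[OF M] M] .
  also have "inner M (mat 1) = inner (mat 1) M" by (rule inner_commute)
  also have "\<dots> \<le> inner (mat 1) (mat 1 :: complex^'n^'n)"
    using eff_bounds(2)[OF I M] .
  finally have "inner M M \<le> inner (mat 1) (mat 1 :: complex^'n^'n)" .
  then show "norm M \<le> sqrt (inner (mat 1) (mat 1 :: complex^'n^'n))"
    unfolding norm_eq_sqrt_inner[of M] by (rule real_sqrt_le_mono)
qed

lemma closed_pos: "closed {A :: complex^'n^'n. positive_op A}"
proof -
  have lin: "linear (cadj :: complex^'n^'n \<Rightarrow> _)"
    by (rule linearI) (simp_all add: cadj_add cadj_scaleR)
  have c: "continuous_on UNIV (cadj :: complex^'n^'n \<Rightarrow> _)"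
    using lin by (simp add: linear_conv_bounded_linear linear_continuous_on)
  have "{A :: complex^'n^'n. positive_op A} = {A. cadj A = A} \<inter> (\<Inter>x. {A. 0 \<le> inner (outer x) A})"
    by (auto simp: positive_op_def qform_inner)
  moreover have "closed {A :: complex^'n^'n. cadj A = A}"
    by (rule closed_Collect_eq[OF c continuous_on_id])
  moreover have "closed (\<Inter>x. {A :: complex^'n^'n. 0 \<le> inner (outer x) A})"
    by (intro closed_INT ballI closed_halfspace_ge[unfolded atLeast_def])
  ultimately show ?thesis by auto
qed

lemma convex_pos: "convex {A :: complex^'n^'n. positive_op A}"
  unfolding convex_def
  by (auto intro!: positive_add positive_scaleR)

lemma trace_scaleR: "trace (c *\<^sub>R A) = c *\<^sub>R trace (A :: complex^'n^'n)"
  by (simp add: trace_def scaleR_sum_right)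

lemma sep:
  fixes S :: "(complex^'n^'n) set" and z :: "complex^'n^'n"
  assumes cv: "convex S" and cl: "closed S" and zS: "z \<notin> S" and ne: "S \<noteq> {}"
    and hS: "\<forall>Y\<in>S. cadj Y = Y" and hz: "cadj z = z"
    and up: "\<forall>Y\<in>S. \<forall>P. positive_op P \<longrightarrow> Y + P \<in> S"
  shows "\<exists>\<rho>\<in>pdo. \<exists>\<beta>. inner \<rho> z < \<beta> \<and> (\<forall>Y\<in>S. \<beta> < inner \<rho> Y)"
proof -
  obtain a b where ab: "inner a z < b" "\<forall>x\<in>S. b < inner a x"
    using separating_hyperplane_closed_point[OF cv cl zS] by blast
  obtain Y0 where Y0: "Y0 \<in> S" using ne by blast
  define r0 where "r0 = (1/2) *\<^sub>R (a + cadj a)"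
  have hr0: "cadj r0 = r0" by (simp add: r0_def cadj_scaleR cadj_add add.commute)
  have r0a: "inner r0 Y = inner a Y" if "cadj Y = Y" for Y
    using inner_cadj_herm[OF that, of a] by (simp add: r0_def inner_add_left)
  have aP: "0 \<le> inner a P" if P: "positive_op P" for P
  proof (rule ccontr)
    assume neg: "\<not> 0 \<le> inner a P"
    define t where "t = (inner a Y0 - b + 1) / (- inner a P)"
    have "b < inner a Y0" using ab(2) Y0 by blast
    then have tpos: "0 < t" using neg unfolding t_def by (intro divide_pos_pos) auto
    have "Y0 + t *\<^sub>R P \<in> S" using up Y0 positive_scaleR[OF P] tpos by simp
    then have "b < inner a (Y0 + t *\<^sub>R P)" using ab(2) by blast
    then have "b < inner a Y0 + t * inner a P" by (simp add: inner_add_right)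
    moreover have "t * inner a P = - (inner a Y0 - b + 1)" using neg by (simp add: t_def)
    ultimately show False by simp
  qed
  have pr0: "positive_op r0"
    unfolding positive_op_def
  proof (intro conjI allI hr0)
    fix x
    have "Re (qform r0 x) = inner r0 (outer x)" by (simp add: qform_inner inner_commute)
    also have "\<dots> = inner a (outer x)" by (simp add: r0a)
    finally show "0 \<le> Re (qform r0 x)" using aP[OF positive_outer] by simp
  qed
  define c where "c = 1 / (1 + \<bar>Re (trace r0)\<bar>)"
  have cpos: "0 < c" by (simp add: c_def add_pos_nonneg)
  define \<rho> where "\<rho> = c *\<^sub>R r0"
  have "c * Re (trace r0) \<le> 1"
    by (simp add: c_def divide_le_eq add_pos_nonneg)
  then have rho: "\<rho> \<in> pdo"
    using positive_scaleR[OF pr0, of c] cpos by (simp add: pdo_def \<rho>_def trace_scaleR)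
  have rY: "inner \<rho> Y = c * inner a Y" if "cadj Y = Y" for Y
    using r0a[OF that] by (simp add: \<rho>_def)
  show ?thesis
  proof (intro bexI[OF _ rho] exI[of _ "c * b"] conjI ballI)
    show "inner \<rho> z < c * b" using rY[OF hz] ab(1) cpos by simp
    fix Y assume "Y \<in> S"
    then show "c * b < inner \<rho> Y" using rY hS ab(2) cpos by simp
  qed
qed

theorem theorem3p5:
  fixes V :: "'v set" and \<Theta> \<Psi> :: "(complex^'n^'n) set"
  assumes "finite V" and "CARD('n) = 2 ^ card V"
    and "\<Theta> \<subseteq> effects" and "\<Psi> \<subseteq> effects"
    and "convex \<Theta>" and "closed \<Theta>" and "convex \<Psi>" and "closed \<Psi>"
  shows "(\<Theta> \<noteq> {} \<longrightarrow> (preceq_dem \<Theta> \<Psi> \<longleftrightarrow> le_S \<Theta> \<Psi>))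
       \<and> (\<Psi> \<noteq> {} \<longrightarrow> (preceq_ang \<Theta> \<Psi> \<longleftrightarrow> le_H \<Theta> \<Psi>))"
proof -
  have ThE: "\<Theta> \<subseteq> effects" and PsE: "\<Psi> \<subseteq> effects" using assms by auto
  have cTh: "compact \<Theta>" using assms(6) bounded_subset[OF effects_bounded ThE]
    by (simp add: compact_eq_bounded_closed)
  have cPs: "compact \<Psi>" using assms(8) bounded_subset[OF effects_bounded PsE]
    by (simp add: compact_eq_bounded_closed)
  let ?Pos = "{A :: complex^'n^'n. positive_op A}"
  have bb: "bdd_below ((\<lambda>M. inner \<rho> M) ` X)" if "\<rho> \<in> pdo" "X \<subseteq> effects" for \<rho> X
    using that eff_bounds(1)[of \<rho>] by (auto simp: pdo_def bdd_below_def)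
  have ba: "bdd_above ((\<lambda>M. inner \<rho> M) ` X)" if "\<rho> \<in> pdo" "X \<subseteq> effects" for \<rho> X
    using that eff_bounds(2)[of \<rho>] by (auto simp: pdo_def bdd_above_def)
  have ed: "exp_dem \<rho> X = (if X = {} then inner \<rho> (mat 1) else Inf ((\<lambda>M. inner \<rho> M) ` X))"
    if "\<rho> \<in> pdo" for \<rho> X
    using that by (simp add: exp_dem_def pdo_trace pdo_trace_one)
  have ea: "exp_ang \<rho> X = (if X = {} then 0 else Sup ((\<lambda>M. inner \<rho> M) ` X))"
    if "\<rho> \<in> pdo" for \<rho> X
    using that by (simp add: exp_ang_def pdo_trace)
  have part1: "preceq_dem \<Theta> \<Psi> \<longleftrightarrow> le_S \<Theta> \<Psi>" if ne: "\<Theta> \<noteq> {}"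
  proof
    assume S: "le_S \<Theta> \<Psi>"
    show "preceq_dem \<Theta> \<Psi>"
      unfolding preceq_dem_def
    proof
      fix \<rho> :: "complex^'n^'n" assume r: "\<rho> \<in> pdo"
      then have pr: "positive_op \<rho>" by (simp add: pdo_def)
      show "exp_dem \<rho> \<Theta> \<le> exp_dem \<rho> \<Psi>"
      proof (cases "\<Psi> = {}")
        case True
        obtain M0 where M0: "M0 \<in> \<Theta>" using ne by blast
        have "Inf ((\<lambda>M. inner \<rho> M) ` \<Theta>) \<le> inner \<rho> M0"
          by (rule cInf_lower) (use M0 bb[OF r ThE] in auto)
        also have "\<dots> \<le> inner \<rho> (mat 1)" using eff_bounds(2)[OF pr] M0 ThE by auto
        finally show ?thesis using True ne by (simp add: ed[OF r])
      next
        case False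
        have "Inf ((\<lambda>M. inner \<rho> M) ` \<Theta>) \<le> Inf ((\<lambda>M. inner \<rho> M) ` \<Psi>)"
        proof (rule cInf_greatest)
          show "(\<lambda>M. inner \<rho> M) ` \<Psi> \<noteq> {}" using False by simp
          fix y assume "y \<in> (\<lambda>M. inner \<rho> M) ` \<Psi>"
          then obtain N where N: "N \<in> \<Psi>" "y = inner \<rho> N" by blast
          obtain M where M: "M \<in> \<Theta>" "M \<sqsubseteq>\<^sub>L N" using S N by (auto simp: le_S_def)
          have "Inf ((\<lambda>M. inner \<rho> M) ` \<Theta>) \<le> inner \<rho> M"
            by (rule cInf_lower) (use M bb[OF r ThE] in auto)
          also have "\<dots> \<le> inner \<rho> N" by (rule inner_mono[OF pr M(2)])
          finally show "Inf ((\<lambda>M. inner \<rho> M) ` \<Theta>) \<le> y" using N by simp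
        qed
        then show ?thesis using False ne by (simp add: ed[OF r])
      qed
    qed
  next
    assume D: "preceq_dem \<Theta> \<Psi>"
    show "le_S \<Theta> \<Psi>"
      unfolding le_S_def
    proof (rule ballI, rule ccontr)
      fix N assume N: "N \<in> \<Psi>" and nex: "\<not> (\<exists>M\<in>\<Theta>. M \<sqsubseteq>\<^sub>L N)"
      define S where "S = (\<Union>P\<in>?Pos. \<Union>M\<in>\<Theta>. {P + M})"
      have memS: "Y \<in> S \<longleftrightarrow> (\<exists>P M. positive_op P \<and> M \<in> \<Theta> \<and> Y = P + M)" for Y
        by (auto simp: S_def)
      have "closed S" unfolding S_def by (rule closed_compact_sums[OF closed_pos cTh])
      moreover have "convex S" unfolding S_def by (rule convex_sums[OF convex_pos assms(5)])
      moreover have "N \<notin> S"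
      proof
        assume "N \<in> S"
        then obtain P M where "positive_op P" "M \<in> \<Theta>" "N = P + M" by (auto simp: memS)
        then show False using nex by (auto simp: loewner_le_def)
      qed
      moreover have "S \<noteq> {}"
      proof -
        obtain M0 where "M0 \<in> \<Theta>" using ne by blast
        then have "0 + M0 \<in> S" unfolding memS by (intro exI[of _ 0] exI[of _ M0]) simp
        then show ?thesis by blast
      qed
      moreover have "\<forall>Y\<in>S. cadj Y = Y"
        using ThE by (auto simp: memS cadj_add pos_herm eff_pos subsetD)
      moreover have "cadj N = N" using N PsE by (auto simp: pos_herm eff_pos)
      moreover have "\<forall>Y\<in>S. \<forall>P. positive_op P \<longrightarrow> Y + P \<in> S"
      proof (intro ballI allI impI)
        fix Y P :: "complex^'n^'n" assume "Y \<in> S" "positive_op P"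
        then obtain P' M where "positive_op P'" "M \<in> \<Theta>" "Y = P' + M" by (auto simp: memS)
        moreover then have "Y + P = (P' + P) + M" by (simp add: algebra_simps)
        ultimately show "Y + P \<in> S" using \<open>positive_op P\<close> positive_add
          unfolding memS by blast
      qed
      ultimately obtain \<rho> \<beta> where r: "\<rho> \<in> pdo" and b1: "inner \<rho> N < \<beta>"
        and b2: "\<forall>Y\<in>S. \<beta> < inner \<rho> Y"
        using sep[of S N] by blast
      have th: "\<beta> < inner \<rho> M" if "M \<in> \<Theta>" for M
      proof -
        have "0 + M \<in> S" unfolding memS using that by (intro exI[of _ 0] exI[of _ M]) simp
        then show ?thesis using b2 by fastforce
      qed
      have "\<beta> \<le> Inf ((\<lambda>M. inner \<rho> M) ` \<Theta>)"
        by (rule cInf_greatest) (use ne th in \<open>auto intro: less_imp_le\<close>)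
      also have "\<dots> = exp_dem \<rho> \<Theta>" using ne by (simp add: ed[OF r])
      also have "\<dots> \<le> exp_dem \<rho> \<Psi>" using D r by (simp add: preceq_dem_def)
      also have "\<dots> = Inf ((\<lambda>M. inner \<rho> M) ` \<Psi>)" using N by (auto simp: ed[OF r])
      also have "\<dots> \<le> inner \<rho> N"
        by (rule cInf_lower) (use N bb[OF r PsE] in auto)
      finally show False using b1 by simp
    qed
  qed
  have part2: "preceq_ang \<Theta> \<Psi> \<longleftrightarrow> le_H \<Theta> \<Psi>" if ne: "\<Psi> \<noteq> {}"
  proof
    assume H: "le_H \<Theta> \<Psi>"
    show "preceq_ang \<Theta> \<Psi>"
      unfolding preceq_ang_def
    proof
      fix \<rho> :: "complex^'n^'n" assume r: "\<rho> \<in> pdo"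
      then have pr: "positive_op \<rho>" by (simp add: pdo_def)
      show "exp_ang \<rho> \<Theta> \<le> exp_ang \<rho> \<Psi>"
      proof (cases "\<Theta> = {}")
        case True
        obtain N0 where N0: "N0 \<in> \<Psi>" using ne by blast
        have "0 \<le> inner \<rho> N0" using eff_bounds(1)[OF pr] N0 PsE by auto
        also have "\<dots> \<le> Sup ((\<lambda>M. inner \<rho> M) ` \<Psi>)"
          by (rule cSup_upper) (use N0 ba[OF r PsE] in auto)
        finally show ?thesis using True ne by (simp add: ea[OF r])
      next
        case False
        have "Sup ((\<lambda>M. inner \<rho> M) ` \<Theta>) \<le> Sup ((\<lambda>M. inner \<rho> M) ` \<Psi>)"
        proof (rule cSup_least)
          show "(\<lambda>M. inner \<rho> M) ` \<Theta> \<noteq> {}" using False by simp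
          fix y assume "y \<in> (\<lambda>M. inner \<rho> M) ` \<Theta>"
          then obtain M where M: "M \<in> \<Theta>" "y = inner \<rho> M" by blast
          obtain N where N: "N \<in> \<Psi>" "M \<sqsubseteq>\<^sub>L N" using H M by (auto simp: le_H_def)
          have "inner \<rho> M \<le> inner \<rho> N" by (rule inner_mono[OF pr N(2)])
          also have "\<dots> \<le> Sup ((\<lambda>M. inner \<rho> M) ` \<Psi>)"
            by (rule cSup_upper) (use N ba[OF r PsE] in auto)
          finally show "y \<le> Sup ((\<lambda>M. inner \<rho> M) ` \<Psi>)" using M by simp
        qed
        then show ?thesis using False ne by (simp add: ea[OF r])
      qed
    qed
  next
    assume D: "preceq_ang \<Theta> \<Psi>"
    show "le_H \<Theta> \<Psi>"
      unfolding le_H_def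
    proof (rule ballI, rule ccontr)
      fix M assume M: "M \<in> \<Theta>" and nex: "\<not> (\<exists>N\<in>\<Psi>. M \<sqsubseteq>\<^sub>L N)"
      define S where "S = (\<Union>P\<in>?Pos. \<Union>N\<in>(\<lambda>x. - x) ` \<Psi>. {P + N})"
      have memS: "Y \<in> S \<longleftrightarrow> (\<exists>P N. positive_op P \<and> N \<in> \<Psi> \<and> Y = P - N)" for Y
        by (auto simp: S_def)
      have "closed S" unfolding S_def
        by (rule closed_compact_sums[OF closed_pos compact_negations[OF cPs]])
      moreover have "convex S" unfolding S_def
        by (rule convex_sums[OF convex_pos convex_negations[OF assms(7)]])
      moreover have "- M \<notin> S"
      proof
        assume "- M \<in> S"
        then obtain P N where "positive_op P" "N \<in> \<Psi>" "- M = P - N" by (auto simp: memS)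
        moreover then have "N - M = P" by (simp add: algebra_simps)
        ultimately show False using nex by (auto simp: loewner_le_def)
      qed
      moreover have "S \<noteq> {}"
      proof -
        obtain N0 where "N0 \<in> \<Psi>" using ne by blast
        then have "0 - N0 \<in> S" unfolding memS by (intro exI[of _ 0] exI[of _ N0]) simp
        then show ?thesis by blast
      qed
      moreover have "\<forall>Y\<in>S. cadj Y = Y"
        using PsE by (auto simp: memS cadj_diff pos_herm eff_pos subsetD)
      moreover have "cadj (- M) = - M" using M ThE by (auto simp: cadj_minus pos_herm eff_pos)
      moreover have "\<forall>Y\<in>S. \<forall>P. positive_op P \<longrightarrow> Y + P \<in> S"
      proof (intro ballI allI impI)
        fix Y P :: "complex^'n^'n" assume "Y \<in> S" "positive_op P"
        then obtain P' N where "positive_op P'" "N \<in> \<Psi>" "Y = P' - N" by (auto simp: memS)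
        moreover then have "Y + P = (P' + P) - N" by (simp add: algebra_simps)
        ultimately show "Y + P \<in> S" using \<open>positive_op P\<close> positive_add
          unfolding memS by blast
      qed
      ultimately obtain \<rho> \<beta> where r: "\<rho> \<in> pdo" and b1: "inner \<rho> (- M) < \<beta>"
        and b2: "\<forall>Y\<in>S. \<beta> < inner \<rho> Y"
        using sep[of S "- M"] by blast
      have ps: "inner \<rho> N < - \<beta>" if "N \<in> \<Psi>" for N
      proof -
        have "0 - N \<in> S" unfolding memS using that by (intro exI[of _ 0] exI[of _ N]) simp
        then show ?thesis using b2 by (auto simp: inner_diff_right)
      qed
      have "inner \<rho> M \<le> Sup ((\<lambda>M. inner \<rho> M) ` \<Theta>)"
        by (rule cSup_upper) (use M ba[OF r ThE] in auto)
      also have "\<dots> = exp_ang \<rho> \<Theta>" using M by (auto simp: ea[OF r])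
      also have "\<dots> \<le> exp_ang \<rho> \<Psi>" using D r by (simp add: preceq_ang_def)
      also have "\<dots> = Sup ((\<lambda>M. inner \<rho> M) ` \<Psi>)" using ne by (simp add: ea[OF r])
      also have "\<dots> \<le> - \<beta>"
        by (rule cSup_least) (use ne ps in \<open>auto intro: less_imp_le\<close>)
      finally show False using b1 by (simp add: inner_minus_right)
    qed
  qed
  show ?thesis using part1 part2 by blast
qed


end
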